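(* Let $Q,P\in S^2_0(\mathbb R^4)$ with $\det Q<0$, and suppose that $P=\mu Q$ for some $\mu\in\mathbb R\setminus\{0\}$ (coupled condition) and that $(\operatorname{Adj}Q)_0=\nu\,(P^2)_0$ for some $\nu\in\mathbb R$ (co-coupled condition). Then there exist $g\in\mathrm{SO}(4)$ and nonzero reals $q,p$ such that $Q=q\,gDg^T$ and $P=p\,gDg^T$, where $D=\operatorname{diag}(-3,1,1,1)$. In other words, modulo equivalence and scaling, the unique invariant nearly-Kähler structure on $S^3\times S^3$ corresponds to $(Q,P)=(q\,D,p\,D)$ with cohomology class $c=0$.
   Context: $S^2_0(\mathbb R^4)$ is the space of real symmetric trace-free $4\times4$ matrices; $X_0=X-\frac14(\operatorname{tr}X)I$; $\operatorname{Adj}$ is the adjugate. (In the paper's framework, invariant half-flat structures on $S^3\times S^3$ with $[\gamma]=0$ are encoded by commuting pairs $(Q,P)$ of such matrices with $\det Q<0$, where $P$ encodes $\omega$ and $Q$ encodes a primitive of $\gamma$; nearly-Kähler means both coupled and co-coupled, which in matrix form reads as the two conditions above.) *)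

theory Defs
  imports "HOL-Analysis.Analysis"
begin

(* Adjugate (classical adjoint): (Adj A)_{ij} = (-1)^(i+j) M_{ji}, which equals the
   determinant of A with row j replaced by the standard basis row e_i. *)
definition adjugate :: "real^'n^'n \<Rightarrow> real^'n^'n" where
  "adjugate A = (\<chi> i j. det (\<chi> k l. if k = j then (if l = i then 1 else 0) else A $ k $ l))"

definition tracefree_part :: "real^'n^'n \<Rightarrow> real^'n^'n" where
  "tracefree_part X = X - (trace X / real CARD('n)) *\<^sub>R mat 1"

definition sym_tracefree :: "real^'n^'n \<Rightarrow> bool" where
  "sym_tracefree X \<longleftrightarrow> transpose X = X \<and> trace X = 0"

definition Dmat :: "real^4^4" where
  "Dmat = (\<chi> i j. if i = j then (if i = 0 then -3 else 1) else 0)"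

end

theory Submission
  imports Defs
begin
lemma det_4:
  "det (A::'a::comm_ring_1^4^4) =
 A$1$1*A$2$2*A$3$3*A$4$4 - A$1$1*A$2$2*A$3$4*A$4$3 - A$1$1*A$2$3*A$3$2*A$4$4 + A$1$1*A$2$3*A$3$4*A$4$2
+ A$1$1*A$2$4*A$3$2*A$4$3 - A$1$1*A$2$4*A$3$3*A$4$2 - A$1$2*A$2$1*A$3$3*A$4$4 + A$1$2*A$2$1*A$3$4*A$4$3
+ A$1$2*A$2$3*A$3$1*A$4$4 - A$1$2*A$2$3*A$3$4*A$4$1 - A$1$2*A$2$4*A$3$1*A$4$3 + A$1$2*A$2$4*A$3$3*A$4$1
+ A$1$3*A$2$1*A$3$2*A$4$4 - A$1$3*A$2$1*A$3$4*A$4$2 - A$1$3*A$2$2*A$3$1*A$4$4 + A$1$3*A$2$2*A$3$4*A$4$1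
+ A$1$3*A$2$4*A$3$1*A$4$2 - A$1$3*A$2$4*A$3$2*A$4$1 - A$1$4*A$2$1*A$3$2*A$4$3 + A$1$4*A$2$1*A$3$3*A$4$2
+ A$1$4*A$2$2*A$3$1*A$4$3 - A$1$4*A$2$2*A$3$3*A$4$1 - A$1$4*A$2$3*A$3$1*A$4$2 + A$1$4*A$2$3*A$3$2*A$4$1"
proof -
  have f1: "finite {2::4, 3, 4}" "1 \<notin> {2::4, 3, 4}" by auto
  have f2: "finite {3::4, 4}" "2 \<notin> {3::4, 4}" by auto
  have f3: "finite {4::4}" "3 \<notin> {4::4}" by auto
  show ?thesis
    unfolding det_def UNIV_4
    unfolding sum_over_permutations_insert[OF f1]
    unfolding sum_over_permutations_insert[OF f2]
    unfolding sum_over_permutations_insert[OF f3]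
    unfolding permutes_sing
    by (simp add: sign_swap_id permutation_swap_id sign_compose sign_id swap_id_eq permutation_compose algebra_simps)
qed

definition ent :: "real \<Rightarrow> real \<Rightarrow> real \<Rightarrow> real \<Rightarrow> real \<Rightarrow> real \<Rightarrow> real \<Rightarrow> real \<Rightarrow> real \<Rightarrow> real \<Rightarrow> 4 \<Rightarrow> 4 \<Rightarrow> real" where
 "ent a b c d e f g h k l i j = (if i = 1 then (if j = 1 then a else if j = 2 then d else if j = 3 then e else f)
   else if i = 2 then (if j = 1 then d else if j = 2 then b else if j = 3 then g else h)
   else if i = 3 then (if j = 1 then e else if j = 2 then g else if j = 3 then c else k)
   else (if j = 1 then f else if j = 2 then h else if j = 3 then k else l))"

lemma n4: "(2::4) \<noteq> 1" "(3::4) \<noteq> 1" "(4::4) \<noteq> 1" "(3::4) \<noteq> 2" "(4::4) \<noteq> 2" "(4::4) \<noteq> 3"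
  "(1::4) \<noteq> 2" "(1::4) \<noteq> 3" "(1::4) \<noteq> 4" "(2::4) \<noteq> 3" "(2::4) \<noteq> 4" "(3::4) \<noteq> 4" by simp_all



lemma adj_mul:
  fixes A :: "real^'n^'n"
  shows "A ** adjugate A = det A *\<^sub>R mat 1"
proof -
  have e: "(\<chi> k l. if k = j then (if l = m then 1 else 0) else A$k$l) =
     (\<chi> r. if r = j then axis m 1 else row r A)" for j m :: 'n
    by (simp add: vec_eq_iff axis_def row_def)
  have rowsum: "(\<Sum>m\<in>UNIV. A$i$m *s axis m (1::real)) = row i A" for i
    by (simp add: vec_eq_iff row_def axis_def if_distrib cong: if_cong)
  have key: "(A ** adjugate A)$i$j = det (\<chi> r. if r = j then row i A else row r A)" for i j
  proof -
    have "(A ** adjugate A)$i$j = (\<Sum>m\<in>UNIV. A$i$m * det (\<chi> r. if r = j then axis m 1 else row r A))"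
      by (simp add: matrix_matrix_mult_def adjugate_def e)
    also have "\<dots> = (\<Sum>m\<in>UNIV. det (\<chi> r. if r = j then A$i$m *s axis m 1 else row r A))"
      by (simp add: det_row_mul)
    also have "\<dots> = det (\<chi> r. if r = j then (\<Sum>m\<in>UNIV. A$i$m *s axis m (1::real)) else row r A)"
      by (rule det_linear_row_sum[symmetric]) simp
    finally show ?thesis unfolding rowsum .
  qed
  show ?thesis
  proof (rule iffD2[OF vec_eq_iff], intro allI, rule iffD2[OF vec_eq_iff], intro allI)
    fix i j
    show "(A ** adjugate A) $ i $ j = (det A *\<^sub>R mat 1) $ i $ j"
    proof (cases "i = j")
      case True
      have "(\<chi> r. if r = j then row i A else row r A) = A" using True by (simp add: vec_eq_iff row_def)
      then show ?thesis using True key[of i j] by (simp add: mat_def)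
    next
      case False
      have "det (\<chi> r. if r = j then row i A else row r A) = 0"
        by (rule det_identical_rows[OF False]) (simp add: row_def vec_eq_iff False)
      then show ?thesis using False key by (simp add: mat_def)
    qed
  qed
qed
lemma symD': assumes "transpose (Q::'a^'n^'n) = Q" shows "Q$j$i = Q$i$j"
proof -
  have "(transpose Q)$i$j = Q$i$j" using assms by simp
  thus ?thesis by (simp add: transpose_def)
qed
lemma symD: assumes "transpose (Q::real^4^4) = Q"
  shows "Q$2$1 = Q$1$2" "Q$3$1 = Q$1$3" "Q$4$1 = Q$1$4" "Q$3$2 = Q$2$3" "Q$4$2 = Q$2$4" "Q$4$3 = Q$3$4"
  using symD'[OF assms] by blast+
lemma trD: assumes "trace (Q::real^4^4) = 0" shows "Q$4$4 = -(Q$1$1+Q$2$2+Q$3$3)"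
  using assms by (simp add: trace_def sum_4)

lemma Qform: assumes "transpose (Q::real^4^4) = Q" "trace Q = 0"
  shows "Q = (\<chi> i j. ent (Q$1$1) (Q$2$2) (Q$3$3) (Q$1$2) (Q$1$3) (Q$1$4) (Q$2$3) (Q$2$4) (Q$3$4) (-(Q$1$1+Q$2$2+Q$3$3)) i j)"
  unfolding vec_eq_iff forall_4 ent_def using symD[OF assms(1)] trD[OF assms(2)] by (simp add: n4)
lemma CH0: "let Q = (\<chi> i j. ent a b c d e f g h k (-(a+b+c)) i j) in
  6 *\<^sub>R (Q**Q**Q**Q) - (3*trace(Q**Q)) *\<^sub>R (Q**Q) - (2*trace(Q**Q**Q)) *\<^sub>R Q + (6*det Q) *\<^sub>R mat 1 = 0"
  unfolding Let_def vec_eq_iff forall_4 matrix_matrix_mult_def det_4 sum_4 trace_def mat_def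
  apply (simp add: ent_def n4)
  by algebra

lemma CH: assumes "transpose (Q::real^4^4) = Q" "trace Q = 0"
  shows "6 *\<^sub>R (Q**Q**Q**Q) - (3*trace(Q**Q)) *\<^sub>R (Q**Q) - (2*trace(Q**Q**Q)) *\<^sub>R Q + (6*det Q) *\<^sub>R mat 1 = 0"
  using CH0 Qform[OF assms] by metis

lemma idem_rank1:
  fixes R :: "real^'n^'n"
  assumes sym: "transpose R = R" and idem: "R ** R = R" and tr: "trace R = 1"
  shows "\<exists>v::real^'n. norm v = 1 \<and> R = (\<chi> i j. v$i * v$j)"
proof -
  have s: "R$j$i = R$i$j" for i j
  proof -
    have "(transpose R)$i$j = R$i$j" using sym by simp
    thus ?thesis by (simp add: transpose_def)
  qed
  have id: "(\<Sum>m\<in>UNIV. R$i$m * R$m$j) = R$i$j" for i j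
  proof -
    have "(R ** R)$i$j = R$i$j" using idem by simp
    thus ?thesis by (simp add: matrix_matrix_mult_def)
  qed
  have trs: "(\<Sum>i\<in>UNIV. R$i$i) = 1" using tr by (simp add: trace_def)
  obtain k where kpos: "R$k$k > 0"
  proof (rule ccontr)
    assume "\<not> thesis"
    with that have "\<forall>k. R$k$k \<le> 0" by (meson not_le)
    then have "(\<Sum>i\<in>UNIV. R$i$i) \<le> 0" by (simp add: sum_nonpos)
    with trs show False by simp
  qed
  define r where "r = R$k$k"
  have A1: "(\<Sum>i\<in>UNIV. \<Sum>j\<in>UNIV. (R$i$j)^2) = 1"
  proof -
    have "(\<Sum>i\<in>UNIV. \<Sum>j\<in>UNIV. (R$i$j)^2) = (\<Sum>i\<in>UNIV. \<Sum>j\<in>UNIV. R$i$j * R$j$i)"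
      by (simp add: power2_eq_square s)
    also have "\<dots> = (\<Sum>i\<in>UNIV. R$i$i)" using id by simp
    finally show ?thesis using trs by simp
  qed
  have A3': "(\<Sum>i\<in>UNIV. (R$i$k)^2) = r"
  proof -
    have "(\<Sum>i\<in>UNIV. (R$i$k)^2) = (\<Sum>i\<in>UNIV. R$k$i * R$i$k)" by (simp add: power2_eq_square s)
    thus ?thesis using id r_def by simp
  qed
  have A2: "(\<Sum>i\<in>UNIV. \<Sum>j\<in>UNIV. R$i$j * R$i$k * R$j$k) = r"
  proof -
    have "(\<Sum>i\<in>UNIV. \<Sum>j\<in>UNIV. R$i$j * R$i$k * R$j$k) = (\<Sum>i\<in>UNIV. R$i$k * (\<Sum>j\<in>UNIV. R$i$j * R$j$k))"
      by (simp add: sum_distrib_left mult_ac)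
    also have "\<dots> = (\<Sum>i\<in>UNIV. R$i$k * R$i$k)" by (simp add: id)
    also have "\<dots> = r" using A3' by (simp add: power2_eq_square)
    finally show ?thesis .
  qed
  have A3: "(\<Sum>i\<in>UNIV. \<Sum>j\<in>UNIV. (R$i$k)^2 * (R$j$k)^2) = r^2"
  proof -
    have "(\<Sum>i\<in>UNIV. \<Sum>j\<in>UNIV. (R$i$k)^2 * (R$j$k)^2) = (\<Sum>i\<in>UNIV. (R$i$k)^2) * (\<Sum>j\<in>UNIV. (R$j$k)^2)"
      by (rule sum_product[symmetric])
    thus ?thesis using A3' by (simp add: power2_eq_square)
  qed
  have tot: "(\<Sum>i\<in>UNIV. \<Sum>j\<in>UNIV. (R$i$j * r - R$i$k * R$j$k)^2) =
     r^2 * (\<Sum>i\<in>UNIV. \<Sum>j\<in>UNIV. (R$i$j)^2) - 2 * r * (\<Sum>i\<in>UNIV. \<Sum>j\<in>UNIV. R$i$j * R$i$k * R$j$k)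
     + (\<Sum>i\<in>UNIV. \<Sum>j\<in>UNIV. (R$i$k)^2 * (R$j$k)^2)"
    by (simp add: power2_eq_square algebra_simps sum.distrib sum_subtractf sum_distrib_left)
  have zero: "(\<Sum>i\<in>UNIV. \<Sum>j\<in>UNIV. (R$i$j * r - R$i$k * R$j$k)^2) = 0"
    unfolding tot A1 A2 A3 by (simp add: power2_eq_square)
  have eq: "R$i$j * r = R$i$k * R$j$k" for i j
  proof -
    have "\<forall>i\<in>UNIV. (\<Sum>j\<in>UNIV. (R$i$j * r - R$i$k * R$j$k)^2) = 0"
      using zero by (subst (asm) sum_nonneg_eq_0_iff) (auto intro: sum_nonneg)
    then have "(\<Sum>j\<in>UNIV. (R$i$j * r - R$i$k * R$j$k)^2) = 0" by simp
    then have "\<forall>j\<in>UNIV. (R$i$j * r - R$i$k * R$j$k)^2 = 0"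
      by (subst (asm) sum_nonneg_eq_0_iff) auto
    then show ?thesis by simp
  qed
  have rpos: "r > 0" using kpos r_def by simp
  define v where "v = (\<chi> i. R$i$k / sqrt r)"
  have "R = (\<chi> i j. v$i * v$j)"
  proof -
    have "R$i$j = v$i * v$j" for i j
      using eq[of i j] rpos by (simp add: v_def field_simps real_sqrt_mult[symmetric])
    thus ?thesis by (simp add: vec_eq_iff)
  qed
  moreover have "norm v = 1"
  proof -
    have "inner v v = (\<Sum>i\<in>UNIV. (R$i$k)^2) / r"
      using rpos by (simp add: inner_vec_def v_def sum_divide_distrib power2_eq_square)
    then have "inner v v = 1" using A3' rpos by simp
    thus ?thesis by (simp add: norm_eq_sqrt_inner)
  qed
  ultimately show ?thesis by blast
qed

lemma rot_part:
  fixes v :: "real^4"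
  assumes nv: "norm v = 1"
  shows "\<exists>g. rotation_matrix g \<and> g ** Dmat ** transpose g = mat 1 - 4 *\<^sub>R (\<chi> i j. v$i * v$j)"
proof -
  obtain g where g: "rotation_matrix g" "g *v (axis 0 1) = v"
    using rotation_matrix_exists_basis[of v 0] nv by auto
  have col: "g$i$0 = v$i" for i
  proof -
    have "(g *v axis 0 1)$i = g$i$0"
      by (simp add: matrix_vector_mult_def axis_def if_distrib cong: if_cong)
    thus ?thesis using g(2) by simp
  qed
  have orth: "g ** transpose g = mat 1" using g(1) by (simp add: rotation_matrix_def orthogonal_matrix_def)
  have o2: "(\<Sum>l\<in>UNIV. g$i$l * g$j$l) = (mat 1 :: real^4^4)$i$j" for i j
  proof -
    have "(g ** transpose g)$i$j = (\<Sum>l\<in>UNIV. g$i$l * g$j$l)"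
      by (simp add: matrix_matrix_mult_def transpose_def)
    thus ?thesis using orth by simp
  qed
  have gD: "(g ** Dmat)$i$l = g$i$l - (if l = 0 then 4 * g$i$l else 0)" for i l
  proof -
    have "(g ** Dmat)$i$l = (\<Sum>m\<in>UNIV. g$i$m * (if m = l then (if m = 0 then -3 else 1) else 0))"
      by (simp add: matrix_matrix_mult_def Dmat_def)
    also have "\<dots> = g$i$l * (if l = 0 then -3 else 1)"
      by (simp add: if_distrib cong: if_cong)
    finally show ?thesis by simp
  qed
  have "(g ** Dmat ** transpose g)$i$j = (mat 1 - 4 *\<^sub>R (\<chi> i j. v$i * v$j))$i$j" for i j
  proof -
    have "(g ** Dmat ** transpose g)$i$j = (\<Sum>l\<in>UNIV. (g$i$l - (if l = 0 then 4 * g$i$l else 0)) * g$j$l)"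
      by (simp add: matrix_matrix_mult_def[of "g ** Dmat"] transpose_def gD)
    also have "\<dots> = (\<Sum>l\<in>UNIV. g$i$l * g$j$l - (if l = 0 then 4 * g$i$l * g$j$l else 0))"
      by (rule sum.cong) (auto simp: algebra_simps)
    also have "\<dots> = (\<Sum>l\<in>UNIV. g$i$l * g$j$l) - (\<Sum>l\<in>UNIV. (if l = 0 then 4 * g$i$l * g$j$l else 0))"
      by (rule sum_subtractf)
    also have "\<dots> = (mat 1 :: real^4^4)$i$j - 4 * v$i * v$j"
      by (simp add: o2 col)
    finally show ?thesis by simp
  qed
  then have "g ** Dmat ** transpose g = mat 1 - 4 *\<^sub>R (\<chi> i j. v$i * v$j)" by (simp add: vec_eq_iff)
  with g(1) show ?thesis by blast
qed

lemma mat_eqI: "(\<And>i j. A$i$j = B$i$j) \<Longrightarrow> (A::'a^'n^'m) = B"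
  by (simp add: vec_eq_iff)

lemma mm_llin: "(A::real^'n^'n) ** (x *\<^sub>R B + y *\<^sub>R mat 1) = x *\<^sub>R (A ** B) + y *\<^sub>R A"
  by (simp add: matrix_add_ldistrib matrix_scalar_ac scalar_matrix_assoc[symmetric])

lemma mm_rlin: "(x *\<^sub>R (A::real^'n^'n) + y *\<^sub>R B) ** C = x *\<^sub>R (A ** C) + y *\<^sub>R (B ** C)"
  by (simp add: matrix_matrix_mult_def vec_eq_iff sum.distrib sum_distrib_left algebra_simps)

lemma trace_lin: "trace (x *\<^sub>R (A::real^'n^'n) + y *\<^sub>R B) = x * trace A + y * trace B"
  by (simp add: trace_def sum.distrib sum_distrib_left)

lemma trace_I4: "trace (mat 1 :: real^4^4) = 4"
  by (simp add: trace_I)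

lemma ent: "A = B \<Longrightarrow> A$i$j = B$i$j" by simp

lemma quad_part:
  fixes Q :: "real^4^4"
  assumes sym: "transpose Q = Q" and tr0: "trace Q = 0" and dneg: "det Q < 0"
    and ch: "6 *\<^sub>R (Q**Q**Q**Q) - (3*trace(Q**Q)) *\<^sub>R (Q**Q) - (2*trace(Q**Q**Q)) *\<^sub>R Q + (6*det Q) *\<^sub>R mat 1 = 0"
    and am: "Q ** adjugate Q = det Q *\<^sub>R mat 1"
    and adjeq: "adjugate Q = c *\<^sub>R (Q**Q) + s *\<^sub>R mat 1"
  shows "\<exists>b. b \<noteq> 0 \<and> Q**Q = (-2*b) *\<^sub>R Q + (3*b^2) *\<^sub>R mat 1"
proof -
  define I :: "real^4^4" where "I = mat 1"
  define Q2 where "Q2 = Q**Q"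
  define Q3 where "Q3 = Q2**Q"
  define Q4 where "Q4 = Q3**Q"
  define d where "d = det Q"
  define S2 where "S2 = trace Q2"
  define S3 where "S3 = trace Q3"
  have dne: "d \<noteq> 0" "d < 0" using dneg d_def by auto
  have Qne: "Q \<noteq> 0" using dneg by (metis det_0 mat_0 less_irrefl)
  have E1: "c *\<^sub>R Q3 + s *\<^sub>R Q = d *\<^sub>R I"
    using am unfolding adjeq mm_llin Q3_def Q2_def d_def I_def matrix_mul_assoc .
  have E1Q: "c *\<^sub>R Q4 + s *\<^sub>R Q2 = d *\<^sub>R Q"
  proof -
    have "(c *\<^sub>R Q3 + s *\<^sub>R Q) ** Q = (d *\<^sub>R I) ** Q" using E1 by simp
    thus ?thesis unfolding mm_rlin Q4_def Q2_def I_def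
      by (simp add: scalar_matrix_assoc[symmetric])
  qed
  have CH: "6 *\<^sub>R Q4 - (3*S2) *\<^sub>R Q2 - (2*S3) *\<^sub>R Q + (6*d) *\<^sub>R I = 0"
    using ch unfolding Q4_def Q3_def Q2_def S2_def S3_def d_def I_def .
  have trI: "trace I = 4" unfolding I_def by (rule trace_I4)
  have cS3: "c * S3 = 4 * d"
  proof -
    have "trace (c *\<^sub>R Q3 + s *\<^sub>R Q) = trace (d *\<^sub>R I + 0 *\<^sub>R I)" using E1 by simp
    thus ?thesis unfolding trace_lin using tr0 trI S3_def by simp
  qed
  have cne: "c \<noteq> 0" using cS3 dne by auto
  define al where "al = -(3*c*S2 + 6 * s)"
  define be where "be = 6*d - 2*c*S3"
  define ga where "ga = 6*c*d"
  have gne: "ga \<noteq> 0" using cne dne ga_def by simp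
  have QUAD: "al *\<^sub>R Q2 + be *\<^sub>R Q + ga *\<^sub>R I = 0"
  proof (rule mat_eqI)
    fix i j
    have h1: "c * Q4$i$j + s * Q2$i$j = d * Q$i$j" using ent[OF E1Q, of i j] by simp
    have h2: "6 * Q4$i$j - (3*S2) * Q2$i$j - (2*S3) * Q$i$j + (6*d) * I$i$j = 0"
      using ent[OF CH, of i j] by simp
    have "al * Q2$i$j + be * Q$i$j + ga * I$i$j = c * (6 * Q4$i$j - (3*S2) * Q2$i$j - (2*S3) * Q$i$j + (6*d) * I$i$j)
       - 6 * (c * Q4$i$j + s * Q2$i$j - d * Q$i$j)"
      unfolding al_def be_def ga_def by (simp add: algebra_simps)
    also have "\<dots> = 0" using h1 h2 by simp
    finally show "(al *\<^sub>R Q2 + be *\<^sub>R Q + ga *\<^sub>R I)$i$j = (0::real^4^4)$i$j" by simp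
  qed
  have ane: "al \<noteq> 0"
  proof
    assume "al = 0"
    then have "trace (be *\<^sub>R Q + ga *\<^sub>R I) = trace (0::real^4^4)" using QUAD by simp
    then have "ga * 4 = 0" unfolding trace_lin using tr0 trI by (simp add: trace_0[unfolded mat_0])
    with gne show False by simp
  qed
  define p where "p = -be/al"
  define q where "q = -ga/al"
  have Q2e: "Q2 = p *\<^sub>R Q + q *\<^sub>R I"
  proof (rule mat_eqI)
    fix i j
    have "al * Q2$i$j + be * Q$i$j + ga * I$i$j = 0" using ent[OF QUAD, of i j] by simp
    then show "Q2$i$j = (p *\<^sub>R Q + q *\<^sub>R I)$i$j" using ane unfolding p_def q_def
      by (simp add: field_simps)
  qed
  have IQ: "I ** Q = Q" unfolding I_def by simp
  have Q3e: "Q3 = (p*p+q) *\<^sub>R Q + (p*q) *\<^sub>R I"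
  proof -
    have X: "Q3 = p *\<^sub>R Q2 + q *\<^sub>R Q" unfolding Q3_def
      by (subst Q2e) (simp add: mm_rlin IQ Q2_def)
    show ?thesis
    proof (rule mat_eqI)
      fix i j show "Q3$i$j = ((p*p+q) *\<^sub>R Q + (p*q) *\<^sub>R I)$i$j"
        using ent[OF X, of i j] ent[OF Q2e, of i j] by (simp add: algebra_simps)
    qed
  qed
  have Q4e: "Q4 = (p*p*p + 2*p*q) *\<^sub>R Q + (p*p*q + q*q) *\<^sub>R I"
  proof -
    have X: "Q4 = (p*p+q) *\<^sub>R Q2 + (p*q) *\<^sub>R Q" unfolding Q4_def
      by (subst Q3e) (simp add: mm_rlin IQ Q2_def)
    show ?thesis
    proof (rule mat_eqI)
      fix i j show "Q4$i$j = ((p*p*p + 2*p*q) *\<^sub>R Q + (p*p*q + q*q) *\<^sub>R I)$i$j"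
        using ent[OF X, of i j] ent[OF Q2e, of i j] by (simp add: algebra_simps)
    qed
  qed
  have S2e: "S2 = 4*q" unfolding S2_def Q2e trace_lin using tr0 trI by simp
  have S3e: "S3 = 4*p*q" unfolding S3_def Q3e trace_lin using tr0 trI by simp
  define u where "u = 6*p*p*p - 8*p*q"
  define w where "w = 6*p*p*q - 6*q*q + 6*d"
  have UW: "u *\<^sub>R Q + w *\<^sub>R I = 0"
  proof (rule mat_eqI)
    fix i j
    have h2: "6 * Q4$i$j - (3*S2) * Q2$i$j - (2*S3) * Q$i$j + (6*d) * I$i$j = 0"
      using ent[OF CH, of i j] by simp
    have a2: "Q2$i$j = p * Q$i$j + q * I$i$j" using ent[OF Q2e, of i j] by simp
    have a4: "Q4$i$j = (p*p*p + 2*p*q) * Q$i$j + (p*p*q + q*q) * I$i$j" using ent[OF Q4e, of i j] by simp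
    have "u * Q$i$j + w * I$i$j = 6 * Q4$i$j - (3*S2) * Q2$i$j - (2*S3) * Q$i$j + (6*d) * I$i$j"
      unfolding a2 a4 S2e S3e u_def w_def by (simp add: algebra_simps)
    then show "(u *\<^sub>R Q + w *\<^sub>R I)$i$j = (0::real^4^4)$i$j" using h2 by simp
  qed
  have w0: "w = 0"
  proof -
    have "trace (u *\<^sub>R Q + w *\<^sub>R I) = trace (0::real^4^4)" using UW by simp
    then show ?thesis unfolding trace_lin using tr0 trI by (simp add: trace_0[unfolded mat_0])
  qed
  have u0: "u = 0" using UW w0 Qne by simp
  have dq: "d = q*q - p*p*q" using w0 w_def by simp
  have p0: "p \<noteq> 0"
  proof
    assume "p = 0"
    then have "d = q*q" using dq by simp
    then show False using dne(2) by (metis not_less zero_le_square)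
  qed
  have qp: "q = 3*p*p/4" using u0 p0 unfolding u_def
    by (simp add: algebra_simps)
  define b where "b = -p/2"
  have "b \<noteq> 0" using p0 b_def by simp
  moreover have "Q**Q = (-2*b) *\<^sub>R Q + (3*b^2) *\<^sub>R mat 1"
    using Q2e unfolding Q2_def I_def b_def qp by (simp add: power2_eq_square)
  ultimately show ?thesis by blast
qed

theorem mainTheorem7:
  fixes Q P :: "real^4^4"
  assumes "sym_tracefree Q" and "sym_tracefree P" and "det Q < 0"
    and "\<exists>\<mu>::real. \<mu> \<noteq> 0 \<and> P = \<mu> *\<^sub>R Q"
    and "\<exists>\<nu>::real. tracefree_part (adjugate Q) = \<nu> *\<^sub>R tracefree_part (P ** P)"
  shows "\<exists>g::real^4^4. \<exists>q p::real. rotation_matrix g \<and> q \<noteq> 0 \<and> p \<noteq> 0 \<and>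
           Q = q *\<^sub>R (g ** Dmat ** transpose g) \<and> P = p *\<^sub>R (g ** Dmat ** transpose g)"
proof -
  have sym: "transpose Q = Q" and tr0: "trace Q = 0" using assms(1) by (auto simp: sym_tracefree_def)
  obtain mu where mu: "mu \<noteq> 0" "P = mu *\<^sub>R Q" using assms(4) by blast
  obtain nu where nu: "tracefree_part (adjugate Q) = nu *\<^sub>R tracefree_part (P ** P)" using assms(5) by blast
  have PP: "P ** P = (mu*mu) *\<^sub>R (Q ** Q)"
    unfolding mu(2) by (simp add: matrix_scalar_ac scalar_matrix_assoc[symmetric])
  have card: "real CARD(4) = 4" by simp
  define c where "c = nu * (mu*mu)"
  define s where "s = trace (adjugate Q) / 4 - nu * ((mu*mu) * trace (Q**Q)) / 4"
  have adjeq: "adjugate Q = c *\<^sub>R (Q**Q) + s *\<^sub>R mat 1"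
  proof (rule mat_eqI)
    fix i j
    have "(tracefree_part (adjugate Q))$i$j = (nu *\<^sub>R tracefree_part (P ** P))$i$j" using nu by simp
    then have "adjugate Q $i$j - trace (adjugate Q) / 4 * (mat 1::real^4^4)$i$j
       = nu * ((mu*mu) * (Q**Q)$i$j - trace ((mu*mu) *\<^sub>R (Q ** Q)) / 4 * (mat 1::real^4^4)$i$j)"
      unfolding tracefree_part_def PP card by simp
    moreover have "trace ((mu*mu) *\<^sub>R (Q ** Q)) = (mu*mu) * trace (Q**Q)"
      using trace_lin[of "mu*mu" "Q**Q" 0 "Q**Q"] by simp
    ultimately show "adjugate Q $i$j = (c *\<^sub>R (Q**Q) + s *\<^sub>R mat 1)$i$j"
      unfolding c_def s_def by (simp add: algebra_simps)
  qed
  obtain b where b: "b \<noteq> 0" "Q**Q = (-2*b) *\<^sub>R Q + (3*b^2) *\<^sub>R mat 1"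
    using quad_part[OF sym tr0 assms(3) CH[OF sym tr0] adj_mul adjeq] by blast
  define x where "x = -1/(4*b)"
  define y :: real where "y = 1/4"
  define R :: "real^4^4" where "R = x *\<^sub>R Q + y *\<^sub>R mat 1"
  have RQ: "R ** Q = x *\<^sub>R (Q**Q) + y *\<^sub>R Q" unfolding R_def mm_rlin by simp
  have RR: "R ** R = R"
  proof -
    have X: "R ** R = x *\<^sub>R (R ** Q) + y *\<^sub>R R"
      using mm_llin[of R x Q y] unfolding R_def[symmetric] by simp
    show ?thesis
    proof (rule mat_eqI)
      fix i j
      have e1: "(R**R)$i$j = x * (x * (Q**Q)$i$j + y * Q$i$j) + y * R$i$j"
        using ent[OF X, of i j] ent[OF RQ, of i j] by simp
      have e2: "(Q**Q)$i$j = (-2*b) * Q$i$j + (3*b^2) * (mat 1::real^4^4)$i$j"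
        using ent[OF b(2), of i j] by simp
      have e3: "R$i$j = x * Q$i$j + y * (mat 1::real^4^4)$i$j" unfolding R_def by simp
      show "(R**R)$i$j = R$i$j" unfolding e1 e2 e3 x_def y_def using b(1)
        by (simp add: field_simps power2_eq_square)
    qed
  qed
  have Rsym: "transpose R = R"
  proof (rule mat_eqI)
    fix i j
    have "Q$j$i = Q$i$j" by (rule symD'[OF sym])
    then show "(transpose R)$i$j = R$i$j" unfolding R_def by (simp add: transpose_def mat_def)
  qed
  have Rtr: "trace R = 1" unfolding R_def trace_lin tr0 trace_I4 y_def by simp
  obtain v :: "real^4" where v: "norm v = 1" "R = (\<chi> i j. v$i * v$j)"
    using idem_rank1[OF Rsym RR Rtr] by blast
  obtain g where g: "rotation_matrix g" "g ** Dmat ** transpose g = mat 1 - 4 *\<^sub>R (\<chi> i j. v$i * v$j)"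
    using rot_part[OF v(1)] by blast
  have Qeq: "Q = b *\<^sub>R (g ** Dmat ** transpose g)"
  proof (rule mat_eqI)
    fix i j
    have e3: "R$i$j = x * Q$i$j + y * (mat 1::real^4^4)$i$j" unfolding R_def by simp
    have "(b *\<^sub>R (g ** Dmat ** transpose g))$i$j = b * ((mat 1::real^4^4)$i$j - 4 * R$i$j)"
      unfolding g(2) v(2) by simp
    also have "\<dots> = Q$i$j" unfolding e3 x_def y_def using b(1) by (simp add: field_simps)
    finally show "Q$i$j = (b *\<^sub>R (g ** Dmat ** transpose g))$i$j" by simp
  qed
  have Peq: "P = (mu*b) *\<^sub>R (g ** Dmat ** transpose g)"
    unfolding mu(2) by (subst Qeq) simp
  show ?thesis
    using g(1) b(1) mu(1) Qeq Peq by (intro exI[of _ g] exI[of _ b] exI[of _ "mu*b"]) simp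
qed

end
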